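(* Let $M\geq N\geq 1$ and let $\rho=\epsilon\,|\psi\rangle\langle\psi|+\frac{1-\epsilon}{MN}I$ be a state on $\mathbb{C}^M\otimes\mathbb{C}^N$, where $0<\epsilon\leq 1$ and $|\psi\rangle$ is a unit vector with Schmidt decomposition $|\psi\rangle=\sum_{k=0}^{N-1}a_k|k\rangle_A\otimes|k\rangle_B$ ($a_k\geq 0$, $\sum_k a_k^2=1$). Let $a_m=\max_k a_k$. Then $$d_{\max}(\rho)=\begin{cases}\epsilon & \text{if } a_m^2\leq \tfrac12,\\ 2\epsilon\, a_m\sqrt{1-a_m^2} & \text{otherwise.}\end{cases}$$
   Context: For a state $\rho$ on $\mathbb{C}^M\otimes\mathbb{C}^N$ let $\rho_B=\mathrm{Tr}_A(\rho)$. A unitary $U^B$ on $\mathbb{C}^N$ is called cyclic (locally noneffective) for $\rho$ if $[\rho_B,U^B]=0$. Set $\rho_f=(I\otimes U^B)\rho(I\otimes U^{B\dagger})$ and define the Fu distance $d(\rho,U^B)=\frac{1}{\sqrt2}\|\rho-\rho_f\|_F$, where $\|X\|_F=\sqrt{\mathrm{Tr}(X^\dagger X)}$ is the Frobenius norm. Define $d_{\max}(\rho)=\max\{d(\rho,U^B): U^B \text{ unitary on } \mathbb{C}^N,\ [\rho_B,U^B]=0\}$. *)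

theory Defs
  imports "Jordan_Normal_Form.Jordan_Normal_Form"
begin

text \<open>Conventions. A bipartite operator on C^M (x) C^N is a complex (M*N) x (M*N) matrix,
  the product basis vector |i>_A (x) |j>_B (i < M, j < N) having index i*N + j.\<close>

definition cadj :: "complex mat \<Rightarrow> complex mat" where
  "cadj A = mat (dim_col A) (dim_row A) (\<lambda>(i,j). cnj (A $$ (j,i)))"

definition unitary_mat :: "nat \<Rightarrow> complex mat \<Rightarrow> bool" where
  "unitary_mat n U \<longleftrightarrow> U \<in> carrier_mat n n \<and> cadj U * U = 1\<^sub>m n \<and> U * cadj U = 1\<^sub>m n"

definition kron :: "nat \<Rightarrow> nat \<Rightarrow> complex mat \<Rightarrow> complex mat \<Rightarrow> complex mat" where
  "kron M N A B = mat (M*N) (M*N) (\<lambda>(r,c). A $$ (r div N, c div N) * B $$ (r mod N, c mod N))"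

definition ptrace_A :: "nat \<Rightarrow> nat \<Rightarrow> complex mat \<Rightarrow> complex mat" where
  "ptrace_A M N \<rho> = mat N N (\<lambda>(j,j'). \<Sum>i<M. \<rho> $$ (i*N + j, i*N + j'))"

definition frob_norm :: "complex mat \<Rightarrow> real" where
  "frob_norm X = sqrt (\<Sum>i<dim_row X. \<Sum>j<dim_col X. (cmod (X $$ (i,j)))\<^sup>2)"

definition rho_f :: "nat \<Rightarrow> nat \<Rightarrow> complex mat \<Rightarrow> complex mat \<Rightarrow> complex mat" where
  "rho_f M N \<rho> U = kron M N (1\<^sub>m M) U * \<rho> * cadj (kron M N (1\<^sub>m M) U)"

definition fu_dist :: "nat \<Rightarrow> nat \<Rightarrow> complex mat \<Rightarrow> complex mat \<Rightarrow> real" where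
  "fu_dist M N \<rho> U = frob_norm (\<rho> - rho_f M N \<rho> U) / sqrt 2"

definition cyclic_unitary :: "nat \<Rightarrow> nat \<Rightarrow> complex mat \<Rightarrow> complex mat \<Rightarrow> bool" where
  "cyclic_unitary M N \<rho> U \<longleftrightarrow> unitary_mat N U \<and> ptrace_A M N \<rho> * U = U * ptrace_A M N \<rho>"

definition d_max :: "nat \<Rightarrow> nat \<Rightarrow> complex mat \<Rightarrow> real" where
  "d_max M N \<rho> = Sup {fu_dist M N \<rho> U | U. cyclic_unitary M N \<rho> U}"

end

theory Submission
  imports Defs
begin

lemma sum_split_mult:
  fixes g :: "nat \<Rightarrow> 'a::comm_monoid_add"
  shows "(\<Sum>s<M*N. g s) = (\<Sum>i<M. \<Sum>j<N. g (i*N+j))"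
proof -
  have "(\<Sum>s<M*N. g s) = (\<Sum>i<M. sum g {i*N..<i*N+N})"
    by (rule sum.nat_group[symmetric])
  also have "\<dots> = (\<Sum>i<M. \<Sum>j<N. g (i*N+j))"
  proof (rule sum.cong[OF refl])
    fix i
    show "sum g {i*N..<i*N+N} = (\<Sum>j<N. g (i*N+j))"
      using sum.shift_bounds_nat_ivl[of g 0 "i*N" N] by (simp add: atLeast0LessThan add.commute)
  qed
  finally show ?thesis .
qed

lemma cinner_sum:
  assumes "x \<in> carrier_vec n" "y \<in> carrier_vec n"
  shows "x \<bullet>c y = (\<Sum>i<n. x$i * cnj (y$i))"
  using assms unfolding scalar_prod_def by (auto simp: atLeast0LessThan conjugate_vec_def)

lemma ip_tensor:
  fixes a :: "nat \<Rightarrow> real" and e f g :: "nat \<Rightarrow> complex vec"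
  assumes e1: "\<forall>k<N. e k \<in> carrier_vec M" and e2: "\<forall>k<N. \<forall>l<N. e k \<bullet>c e l = (if k = l then 1 else 0)"
    and f1: "\<forall>k<N. f k \<in> carrier_vec N" and g1: "\<forall>k<N. g k \<in> carrier_vec N"
  shows "(\<Sum>r<M*N. (\<Sum>k<N. complex_of_real (a k) * (e k $ (r div N)) * (f k $ (r mod N)))
            * cnj (\<Sum>k<N. complex_of_real (a k) * (e k $ (r div N)) * (g k $ (r mod N))))
       = (\<Sum>k<N. complex_of_real ((a k)\<^sup>2) * (f k \<bullet>c g k))"
proof -
  have "(\<Sum>r<M*N. (\<Sum>k<N. complex_of_real (a k) * (e k $ (r div N)) * (f k $ (r mod N)))
            * cnj (\<Sum>k<N. complex_of_real (a k) * (e k $ (r div N)) * (g k $ (r mod N))))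
      = (\<Sum>i<M. \<Sum>j<N. (\<Sum>k<N. complex_of_real (a k) * (e k $ i) * (f k $ j))
            * cnj (\<Sum>k<N. complex_of_real (a k) * (e k $ i) * (g k $ j)))"
    by (subst sum_split_mult, rule sum.cong[OF refl], rule sum.cong[OF refl], simp)
  also have "\<dots> = (\<Sum>i<M. \<Sum>j<N. \<Sum>k<N. \<Sum>l<N. complex_of_real (a k * a l) * (e k $ i * cnj (e l $ i)) * (f k $ j * cnj (g l $ j)))"
    by (simp add: sum_product cnj_sum mult_ac)
  also have "\<dots> = (\<Sum>k<N. \<Sum>l<N. \<Sum>i<M. \<Sum>j<N. complex_of_real (a k * a l) * (e k $ i * cnj (e l $ i)) * (f k $ j * cnj (g l $ j)))"
  proof -
    let ?X = "\<lambda>i j k l. complex_of_real (a k * a l) * (e k $ i * cnj (e l $ i)) * (f k $ j * cnj (g l $ j))"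
    have "(\<Sum>i<M. \<Sum>j<N. \<Sum>k<N. \<Sum>l<N. ?X i j k l) = (\<Sum>i<M. \<Sum>k<N. \<Sum>j<N. \<Sum>l<N. ?X i j k l)"
      by (rule sum.cong[OF refl], rule sum.swap)
    also have "\<dots> = (\<Sum>i<M. \<Sum>k<N. \<Sum>l<N. \<Sum>j<N. ?X i j k l)"
      by (rule sum.cong[OF refl], rule sum.cong[OF refl], rule sum.swap)
    also have "\<dots> = (\<Sum>k<N. \<Sum>i<M. \<Sum>l<N. \<Sum>j<N. ?X i j k l)"
      by (rule sum.swap)
    also have "\<dots> = (\<Sum>k<N. \<Sum>l<N. \<Sum>i<M. \<Sum>j<N. ?X i j k l)"
      by (rule sum.cong[OF refl], rule sum.swap)
    finally show ?thesis .
  qed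
  also have "\<dots> = (\<Sum>k<N. \<Sum>l<N. complex_of_real (a k * a l) * (\<Sum>i<M. e k $ i * cnj (e l $ i)) * (\<Sum>j<N. f k $ j * cnj (g l $ j)))"
    by (simp add: sum_product sum_distrib_left mult_ac)
  also have "\<dots> = (\<Sum>k<N. \<Sum>l<N. complex_of_real (a k * a l) * (e k \<bullet>c e l) * (f k \<bullet>c g l))"
  proof (intro sum.cong refl)
    fix k l assume "k \<in> {..<N}" "l \<in> {..<N}"
    then show "complex_of_real (a k * a l) * (\<Sum>i<M. e k $ i * cnj (e l $ i)) * (\<Sum>j<N. f k $ j * cnj (g l $ j))
      = complex_of_real (a k * a l) * (e k \<bullet>c e l) * (f k \<bullet>c g l)"
      using e1 f1 g1 cinner_sum[of "e k" M "e l"] cinner_sum[of "f k" N "g l"] by simp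
  qed
  also have "\<dots> = (\<Sum>k<N. \<Sum>l<N. if l = k then complex_of_real ((a k)\<^sup>2) * (f k \<bullet>c g k) else 0)"
    using e2 by (intro sum.cong refl) (auto simp: power2_eq_square)
  also have "\<dots> = (\<Sum>k<N. complex_of_real ((a k)\<^sup>2) * (f k \<bullet>c g k))"
    by simp
  finally show ?thesis .
qed

lemma mult_entry:
  fixes A B :: "'a::comm_ring_1 mat"
  assumes "A \<in> carrier_mat n k" "B \<in> carrier_mat k m" "i < n" "j < m"
  shows "(A * B) $$ (i,j) = (\<Sum>p<k. A $$ (i,p) * B $$ (p,j))"
  using assms by (auto simp: scalar_prod_def atLeast0LessThan)

lemma multv_entry:
  fixes A :: "'a::comm_ring_1 mat"
  assumes "A \<in> carrier_mat n k" "v \<in> carrier_vec k" "i < n"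
  shows "(A *\<^sub>v v) $ i = (\<Sum>p<k. A $$ (i,p) * v $ p)"
  using assms by (auto simp: scalar_prod_def atLeast0LessThan)

definition fdiag :: "nat \<Rightarrow> (nat \<Rightarrow> complex vec) \<Rightarrow> complex \<Rightarrow> (nat \<Rightarrow> complex) \<Rightarrow> complex mat" where
  "fdiag N f \<gamma> \<alpha> = mat N N (\<lambda>(j,j'). \<gamma> * (if j = j' then 1 else 0) + (\<Sum>k<N. \<alpha> k * f k $ j * cnj (f k $ j')))"

lemma fdiag_carrier[simp]: "fdiag N f \<gamma> \<alpha> \<in> carrier_mat N N"
  by (simp add: fdiag_def)

lemma fdiag_entry: "j < N \<Longrightarrow> j' < N \<Longrightarrow> fdiag N f \<gamma> \<alpha> $$ (j,j') = \<gamma> * (if j = j' then 1 else 0) + (\<Sum>k<N. \<alpha> k * f k $ j * cnj (f k $ j'))"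
  by (simp add: fdiag_def)

lemma fdiag_mult:
  assumes f1: "\<forall>k<N. f k \<in> carrier_vec N" and f2: "\<forall>k<N. \<forall>l<N. f k \<bullet>c f l = (if k = l then 1 else 0)"
  shows "fdiag N f \<gamma> \<alpha> * fdiag N f \<delta> \<beta> = fdiag N f (\<gamma>*\<delta>) (\<lambda>k. \<gamma> * \<beta> k + \<delta> * \<alpha> k + \<alpha> k * \<beta> k)"
proof (rule eq_matI)
  show "dim_row (fdiag N f \<gamma> \<alpha> * fdiag N f \<delta> \<beta>) = dim_row (fdiag N f (\<gamma>*\<delta>) (\<lambda>k. \<gamma> * \<beta> k + \<delta> * \<alpha> k + \<alpha> k * \<beta> k))"
    "dim_col (fdiag N f \<gamma> \<alpha> * fdiag N f \<delta> \<beta>) = dim_col (fdiag N f (\<gamma>*\<delta>) (\<lambda>k. \<gamma> * \<beta> k + \<delta> * \<alpha> k + \<alpha> k * \<beta> k))"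
    by (simp_all add: fdiag_def)
  fix j j' assume "j < dim_row (fdiag N f (\<gamma>*\<delta>) (\<lambda>k. \<gamma> * \<beta> k + \<delta> * \<alpha> k + \<alpha> k * \<beta> k))"
    "j' < dim_col (fdiag N f (\<gamma>*\<delta>) (\<lambda>k. \<gamma> * \<beta> k + \<delta> * \<alpha> k + \<alpha> k * \<beta> k))"
  then have j: "j < N" "j' < N" by (simp_all add: fdiag_def)
  define A where "A = (\<lambda>j p. \<Sum>k<N. \<alpha> k * f k $ j * cnj (f k $ p))"
  define B where "B = (\<lambda>j p. \<Sum>k<N. \<beta> k * f k $ j * cnj (f k $ p))"
  have "(fdiag N f \<gamma> \<alpha> * fdiag N f \<delta> \<beta>) $$ (j,j') = (\<Sum>p<N. fdiag N f \<gamma> \<alpha> $$ (j,p) * fdiag N f \<delta> \<beta> $$ (p,j'))"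
    using j by (intro mult_entry[of _ N N]) auto
  also have "\<dots> = (\<Sum>p<N. (\<gamma> * (if j = p then 1 else 0) + A j p) * (\<delta> * (if p = j' then 1 else 0) + B p j'))"
    using j by (intro sum.cong refl) (simp add: fdiag_entry A_def B_def)
  also have "\<dots> = (\<Sum>p<N. (if p = j then \<gamma> * \<delta> * (if p = j' then 1 else 0) + \<gamma> * B p j' else 0) + (if p = j' then \<delta> * A j p else 0) + A j p * B p j')"
    by (intro sum.cong refl) (auto simp: algebra_simps)
  also have "\<dots> = \<gamma> * \<delta> * (if j = j' then 1 else 0) + \<gamma> * B j j' + \<delta> * A j j' + (\<Sum>p<N. A j p * B p j')"
    using j by (simp only: sum.distrib sum.delta finite_lessThan lessThan_iff if_True)
  also have "(\<Sum>p<N. A j p * B p j') = (\<Sum>k<N. \<alpha> k * \<beta> k * f k $ j * cnj (f k $ j'))"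
  proof -
    let ?X = "\<lambda>p k l. \<alpha> k * \<beta> l * f k $ j * cnj (f l $ j') * (f l $ p * cnj (f k $ p))"
    have "(\<Sum>p<N. A j p * B p j') = (\<Sum>p<N. \<Sum>k<N. \<Sum>l<N. ?X p k l)"
      unfolding A_def B_def sum_product by (intro sum.cong refl) (simp only: mult_ac)
    also have "\<dots> = (\<Sum>k<N. \<Sum>p<N. \<Sum>l<N. ?X p k l)"
      by (rule sum.swap)
    also have "\<dots> = (\<Sum>k<N. \<Sum>l<N. \<Sum>p<N. ?X p k l)"
      by (rule sum.cong[OF refl], rule sum.swap)
    also have "\<dots> = (\<Sum>k<N. \<Sum>l<N. \<alpha> k * \<beta> l * f k $ j * cnj (f l $ j') * (f l \<bullet>c f k))"
    proof (intro sum.cong refl)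
      fix k l assume "k \<in> {..<N}" "l \<in> {..<N}"
      then have "f l \<bullet>c f k = (\<Sum>p<N. f l $ p * cnj (f k $ p))" using f1 by (intro cinner_sum) auto
      then show "(\<Sum>p<N. ?X p k l) = \<alpha> k * \<beta> l * f k $ j * cnj (f l $ j') * (f l \<bullet>c f k)"
        by (simp only: sum_distrib_left)
    qed
    also have "\<dots> = (\<Sum>k<N. \<Sum>l<N. if l = k then \<alpha> k * \<beta> k * f k $ j * cnj (f k $ j') else 0)"
      using f2 by (intro sum.cong refl) auto
    also have "\<dots> = (\<Sum>k<N. \<alpha> k * \<beta> k * f k $ j * cnj (f k $ j'))" by simp
    finally show ?thesis .
  qed
  also have "\<gamma> * \<delta> * (if j = j' then 1 else 0) + \<gamma> * B j j' + \<delta> * A j j' + (\<Sum>k<N. \<alpha> k * \<beta> k * f k $ j * cnj (f k $ j'))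
     = fdiag N f (\<gamma>*\<delta>) (\<lambda>k. \<gamma> * \<beta> k + \<delta> * \<alpha> k + \<alpha> k * \<beta> k) $$ (j, j')"
    using j by (simp add: fdiag_entry A_def B_def sum.distrib sum_distrib_left ring_distribs mult.assoc)
  finally show "(fdiag N f \<gamma> \<alpha> * fdiag N f \<delta> \<beta>) $$ (j,j') = fdiag N f (\<gamma>*\<delta>) (\<lambda>k. \<gamma> * \<beta> k + \<delta> * \<alpha> k + \<alpha> k * \<beta> k) $$ (j, j')" .
qed

lemma fdiag_commute:
  assumes f1: "\<forall>k<N. f k \<in> carrier_vec N" and f2: "\<forall>k<N. \<forall>l<N. f k \<bullet>c f l = (if k = l then 1 else 0)"
  shows "fdiag N f \<gamma> \<alpha> * fdiag N f \<delta> \<beta> = fdiag N f \<delta> \<beta> * fdiag N f \<gamma> \<alpha>"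
  using fdiag_mult[OF f1 f2] by (simp add: algebra_simps)

lemma fdiag_cadj: "cadj (fdiag N f 1 \<alpha>) = fdiag N f 1 (\<lambda>k. cnj (\<alpha> k))"
  by (rule eq_matI) (auto simp: cadj_def fdiag_def cnj_sum mult_ac)

lemma fdiag_one: "fdiag N f 1 (\<lambda>k. 0) = 1\<^sub>m N"
  by (rule eq_matI) (auto simp: fdiag_def)

lemma fdiag_unitary:
  assumes f1: "\<forall>k<N. f k \<in> carrier_vec N" and f2: "\<forall>k<N. \<forall>l<N. f k \<bullet>c f l = (if k = l then 1 else 0)"
    and w: "\<forall>k. cmod (w k) = 1"
  shows "unitary_mat N (fdiag N f 1 (\<lambda>k. w k - 1))"
proof -
  have key: "cnj (w k) * w k = 1" "w k * cnj (w k) = 1" for k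
    using w[rule_format, of k] complex_norm_square[of "w k"]
    by (simp_all add: mult.commute)
  have z: "(\<lambda>k. 1 * (w k - 1) + 1 * cnj (w k - 1) + cnj (w k - 1) * (w k - 1)) = (\<lambda>k. 0)"
    by (rule ext) (simp add: algebra_simps key)
  have z2: "(\<lambda>k. 1 * cnj (w k - 1) + 1 * (w k - 1) + (w k - 1) * cnj (w k - 1)) = (\<lambda>k. 0)"
    by (rule ext) (simp add: algebra_simps key)
  have "cadj (fdiag N f 1 (\<lambda>k. w k - 1)) * fdiag N f 1 (\<lambda>k. w k - 1)
     = fdiag N f (1*1) (\<lambda>k. 1 * (w k - 1) + 1 * cnj (w k - 1) + cnj (w k - 1) * (w k - 1))"
    unfolding fdiag_cadj by (rule fdiag_mult[OF f1 f2])
  also have "\<dots> = 1\<^sub>m N" unfolding z using fdiag_one by simp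
  finally have A: "cadj (fdiag N f 1 (\<lambda>k. w k - 1)) * fdiag N f 1 (\<lambda>k. w k - 1) = 1\<^sub>m N" .
  have "fdiag N f 1 (\<lambda>k. w k - 1) * cadj (fdiag N f 1 (\<lambda>k. w k - 1))
     = fdiag N f (1*1) (\<lambda>k. 1 * cnj (w k - 1) + 1 * (w k - 1) + (w k - 1) * cnj (w k - 1))"
    unfolding fdiag_cadj by (rule fdiag_mult[OF f1 f2])
  also have "\<dots> = 1\<^sub>m N" unfolding z2 using fdiag_one by simp
  finally have B: "fdiag N f 1 (\<lambda>k. w k - 1) * cadj (fdiag N f 1 (\<lambda>k. w k - 1)) = 1\<^sub>m N" .
  show ?thesis unfolding unitary_mat_def using A B by simp
qed

lemma circ_point:
  fixes r b t :: real
  assumes "0 \<le> r" "0 \<le> b" "\<bar>r - b\<bar> \<le> t" "t \<le> r + b"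
  shows "\<exists>u. cmod u = 1 \<and> cmod (complex_of_real r + complex_of_real b * u) = t"
proof (cases "r = 0 \<or> b = 0")
  case True
  then have "t = r + b" using assms by auto
  then show ?thesis using assms True by (intro exI[of _ 1]) auto
next
  case False
  then have rb: "r > 0" "b > 0" using assms by auto
  define c where "c = (t\<^sup>2 - r\<^sup>2 - b\<^sup>2) / (2*r*b)"
  have t0: "t \<ge> 0" using assms by linarith
  have "t\<^sup>2 \<le> (r+b)\<^sup>2" using assms t0 by (simp add: power_mono)
  moreover have "(r-b)\<^sup>2 \<le> t\<^sup>2" using assms t0
    by (metis abs_le_square_iff abs_of_nonneg)
  ultimately have c1: "c \<le> 1" "-1 \<le> c" using rb unfolding c_def
    by (auto simp: field_simps power2_eq_square)
  have cc: "c\<^sup>2 \<le> 1" using c1 by (metis abs_le_iff abs_square_le_1 minus_le_iff)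
  define u where "u = Complex c (sqrt (1 - c\<^sup>2))"
  have "cmod u = 1" unfolding u_def cmod_def using cc by simp
  moreover have "(cmod (complex_of_real r + complex_of_real b * u))\<^sup>2 = t\<^sup>2"
  proof -
    have "(cmod (complex_of_real r + complex_of_real b * u))\<^sup>2 = (r + b*c)\<^sup>2 + (b * sqrt (1 - c\<^sup>2))\<^sup>2"
      unfolding u_def cmod_def by (simp add: complex_of_real_def)
    also have "\<dots> = r\<^sup>2 + 2*r*b*c + b\<^sup>2"
      using cc by (simp add: power2_eq_square algebra_simps power_mult_distrib)
    also have "\<dots> = t\<^sup>2" unfolding c_def using rb by (simp add: field_simps)
    finally show ?thesis .
  qed
  then have "cmod (complex_of_real r + complex_of_real b * u) = t"
    using t0 by (metis norm_ge_zero power2_eq_iff_nonneg)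
  ultimately show ?thesis by blast
qed

lemma triangle_phases:
  fixes A B C :: real
  assumes "0 \<le> A" "0 \<le> B" "0 \<le> C" "A \<le> B + C" "B \<le> A + C" "C \<le> A + B"
  shows "\<exists>u v. cmod u = 1 \<and> cmod v = 1 \<and> complex_of_real A + complex_of_real B * u + complex_of_real C * v = 0"
proof -
  obtain u where u: "cmod u = 1" "cmod (complex_of_real A + complex_of_real B * u) = C"
    using circ_point[of A B C] assms by (auto simp: abs_le_iff)
  show ?thesis
  proof (cases "C = 0")
    case True
    then show ?thesis using u by (intro exI[of _ u] exI[of _ 1]) auto
  next
    case False
    define v where "v = - (complex_of_real A + complex_of_real B * u) / complex_of_real C"
    have "cmod v = 1" unfolding v_def norm_divide norm_minus_cancel using u False assms(3) by simp
    moreover have "complex_of_real C * v = - (complex_of_real A + complex_of_real B * u)"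
      unfolding v_def using False by simp
    ultimately show ?thesis using u by (intro exI[of _ u] exI[of _ v]) auto
  qed
qed

lemma polygon_phases:
  fixes b :: "nat \<Rightarrow> real"
  assumes b0: "\<forall>k<N. 0 \<le> b k" and bh: "\<forall>k<N. 2 * b k \<le> (\<Sum>k<N. b k)"
  shows "\<exists>w. (\<forall>k. cmod (w k) = 1) \<and> (\<Sum>k<N. complex_of_real (b k) * w k) = 0"
proof (cases "N = 0")
  case True then show ?thesis by (intro exI[of _ "\<lambda>k. 1"]) auto
next
  case False
  define S where "S = (\<Sum>k<N. b k)"
  define P where "P = (\<lambda>j. \<Sum>k<j. b k)"
  have S0: "S \<ge> 0" unfolding S_def using b0 by (intro sum_nonneg) auto
  have ex: "S \<le> 2 * P (Suc (N-1))" using False S0 unfolding P_def S_def by simp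
  define j where "j = (LEAST j. S \<le> 2 * P (Suc j))"
  have jS: "S \<le> 2 * P (Suc j)" unfolding j_def by (rule LeastI[of _ "N-1"], rule ex)
  have jN: "j \<le> N - 1" unfolding j_def by (rule Least_le, rule ex)
  then have jN': "j < N" using False by simp
  have Pmono: "P j \<le> P j'" if "j \<le> j'" "j' \<le> N" for j j'
  proof -
    have "P j' = P j + (\<Sum>k\<in>{j..<j'}. b k)" unfolding P_def using that
      by (metis atLeast0LessThan sum.atLeastLessThan_concat zero_le)
    moreover have "(\<Sum>k\<in>{j..<j'}. b k) \<ge> 0" using b0 that by (intro sum_nonneg) auto
    ultimately show ?thesis by simp
  qed
  have P0: "P j \<ge> 0" using Pmono[of 0 j] jN' by (simp add: P_def)
  have PN: "P N = S" unfolding P_def S_def ..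
  have A: "2 * P j \<le> S"
  proof (cases j)
    case 0 then show ?thesis using S0 by (simp add: P_def)
  next
    case (Suc i)
    have "\<not> S \<le> 2 * P (Suc i)" unfolding j_def
      using Suc not_less_Least[of i "\<lambda>j. S \<le> 2 * P (Suc j)"] j_def by auto
    then show ?thesis using Suc by simp
  qed
  define A where "A = P j"
  define B where "B = b j"
  define C where "C = S - A - B"
  have PS: "P (Suc j) = A + B" unfolding A_def B_def P_def by simp
  have C0: "C \<ge> 0" unfolding C_def using Pmono[of "Suc j" N] jN' PN PS by simp
  have B0: "B \<ge> 0" using b0 jN' B_def by simp
  have Bh: "2 * B \<le> S" using bh jN' B_def S_def by simp
  obtain u v where uv: "cmod u = 1" "cmod v = 1" "complex_of_real A + complex_of_real B * u + complex_of_real C * v = 0"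
    using triangle_phases[of A B C] A jS Bh C0 B0 P0 PS unfolding A_def C_def by auto
  define w where "w = (\<lambda>k. if k < j then 1 else if k = j then u else v)"
  have "(\<Sum>k<N. complex_of_real (b k) * w k) = (\<Sum>k<N. complex_of_real (b k) * v + complex_of_real (b k) * (w k - v))"
    by (simp add: algebra_simps)
  also have "\<dots> = complex_of_real S * v + (\<Sum>k<N. complex_of_real (b k) * (w k - v))"
    by (simp add: sum.distrib S_def sum_distrib_right)
  also have "(\<Sum>k<N. complex_of_real (b k) * (w k - v)) = (\<Sum>k<N. (if k < j then complex_of_real (b k) * (1 - v) else 0) + (if k = j then complex_of_real (b j) * (u - v) else 0))"
    by (rule sum.cong) (auto simp: w_def)
  also have "\<dots> = (\<Sum>k<j. complex_of_real (b k) * (1 - v)) + complex_of_real (b j) * (u - v)"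
  proof -
    have "(\<Sum>k<N. (if k < j then complex_of_real (b k) * (1 - v) else 0)) = (\<Sum>k\<in>{k\<in>{..<N}. k < j}. complex_of_real (b k) * (1 - v))"
      using sum.inter_filter[of "{..<N}" "\<lambda>k. complex_of_real (b k) * (1 - v)" "\<lambda>k. k<j"] by simp
    also have "{k\<in>{..<N}. k < j} = {..<j}" using jN' by auto
    finally show ?thesis using jN' by (simp add: sum.distrib)
  qed
  also have "(\<Sum>k<j. complex_of_real (b k) * (1 - v)) = complex_of_real A * (1 - v)"
    by (simp add: A_def P_def sum_distrib_right)
  finally have "(\<Sum>k<N. complex_of_real (b k) * w k) = complex_of_real S * v + (complex_of_real A * (1 - v) + complex_of_real B * (u - v))"
    by (simp add: B_def)
  also have "\<dots> = complex_of_real A + complex_of_real B * u + complex_of_real C * v"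
    by (simp add: C_def algebra_simps)
  also have "\<dots> = 0" by (rule uv(3))
  finally show ?thesis using uv by (intro exI[of _ w]) (auto simp: w_def)
qed

lemma ip_e:
  fixes a :: "nat \<Rightarrow> real" and e :: "nat \<Rightarrow> complex vec" and x y :: "nat \<Rightarrow> complex"
  assumes e1: "\<forall>k<N. e k \<in> carrier_vec M" and e2: "\<forall>k<N. \<forall>l<N. e k \<bullet>c e l = (if k = l then 1 else 0)"
  shows "(\<Sum>i<M. (\<Sum>k<N. complex_of_real (a k) * (e k $ i) * x k)
            * cnj (\<Sum>k<N. complex_of_real (a k) * (e k $ i) * y k))
       = (\<Sum>k<N. complex_of_real ((a k)\<^sup>2) * x k * cnj (y k))"
proof -
  have "(\<Sum>i<M. (\<Sum>k<N. complex_of_real (a k) * (e k $ i) * x k)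
            * cnj (\<Sum>k<N. complex_of_real (a k) * (e k $ i) * y k))
      = (\<Sum>i<M. \<Sum>k<N. \<Sum>l<N. complex_of_real (a k * a l) * (e k $ i * cnj (e l $ i)) * (x k * cnj (y l)))"
    by (simp add: sum_product cnj_sum mult_ac)
  also have "\<dots> = (\<Sum>k<N. \<Sum>i<M. \<Sum>l<N. complex_of_real (a k * a l) * (e k $ i * cnj (e l $ i)) * (x k * cnj (y l)))"
    by (rule sum.swap)
  also have "\<dots> = (\<Sum>k<N. \<Sum>l<N. \<Sum>i<M. complex_of_real (a k * a l) * (e k $ i * cnj (e l $ i)) * (x k * cnj (y l)))"
    by (rule sum.cong[OF refl], rule sum.swap)
  also have "\<dots> = (\<Sum>k<N. \<Sum>l<N. complex_of_real (a k * a l) * (e k \<bullet>c e l) * (x k * cnj (y l)))"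
  proof (intro sum.cong refl)
    fix k l assume "k \<in> {..<N}" "l \<in> {..<N}"
    then show "(\<Sum>i<M. complex_of_real (a k * a l) * (e k $ i * cnj (e l $ i)) * (x k * cnj (y l)))
      = complex_of_real (a k * a l) * (e k \<bullet>c e l) * (x k * cnj (y l))"
      using e1 cinner_sum[of "e k" M "e l"] by (simp add: sum_distrib_left sum_distrib_right mult_ac)
  qed
  also have "\<dots> = (\<Sum>k<N. \<Sum>l<N. if l = k then complex_of_real ((a k)\<^sup>2) * x k * cnj (y k) else 0)"
    using e2 by (intro sum.cong refl) (auto simp: power2_eq_square)
  also have "\<dots> = (\<Sum>k<N. complex_of_real ((a k)\<^sup>2) * x k * cnj (y k))"
    by simp
  finally show ?thesis .
qed

lemma fdiag_mulv:
  assumes "x \<in> carrier_vec N"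
  shows "fdiag N f \<gamma> \<alpha> *\<^sub>v x = vec N (\<lambda>j. \<gamma> * x $ j + (\<Sum>k<N. \<alpha> k * (\<Sum>p<N. x $ p * cnj (f k $ p)) * f k $ j))"
proof (rule eq_vecI)
  fix j assume "j < dim_vec (vec N (\<lambda>j. \<gamma> * x $ j + (\<Sum>k<N. \<alpha> k * (\<Sum>p<N. x $ p * cnj (f k $ p)) * f k $ j)))"
  then have j: "j < N" by simp
  have "(fdiag N f \<gamma> \<alpha> *\<^sub>v x) $ j = (\<Sum>p<N. (\<gamma> * (if j = p then 1 else 0) + (\<Sum>k<N. \<alpha> k * f k $ j * cnj (f k $ p))) * x $ p)"
    using j assms by (simp add: multv_entry[of _ N N] fdiag_entry)
  also have "\<dots> = (\<Sum>p<N. \<gamma> * (if j = p then 1 else 0) * x $ p) + (\<Sum>p<N. \<Sum>k<N. \<alpha> k * f k $ j * cnj (f k $ p) * x $ p)"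
    by (simp add: algebra_simps sum.distrib sum_distrib_left)
  also have "\<dots> = \<gamma> * x $ j + (\<Sum>k<N. \<Sum>p<N. \<alpha> k * f k $ j * cnj (f k $ p) * x $ p)"
    using j by (simp add: if_distrib if_distribR sum.delta cong: if_cong) (rule sum.swap)
  also have "\<dots> = \<gamma> * x $ j + (\<Sum>k<N. \<alpha> k * (\<Sum>p<N. x $ p * cnj (f k $ p)) * f k $ j)"
    by (simp add: sum_distrib_left sum_distrib_right mult_ac)
  finally show "(fdiag N f \<gamma> \<alpha> *\<^sub>v x) $ j = vec N (\<lambda>j. \<gamma> * x $ j + (\<Sum>k<N. \<alpha> k * (\<Sum>p<N. x $ p * cnj (f k $ p)) * f k $ j)) $ j"
    using j by simp
qed (simp add: fdiag_def)

lemma unitary_ip: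
  assumes U: "unitary_mat N U" and x: "x \<in> carrier_vec N" and y: "y \<in> carrier_vec N"
  shows "(U *\<^sub>v x) \<bullet>c (U *\<^sub>v y) = x \<bullet>c y"
proof -
  have Uc: "U \<in> carrier_mat N N" and UU: "cadj U * U = 1\<^sub>m N" using U unfolding unitary_mat_def by auto
  have ent: "(\<Sum>j<N. cnj (U $$ (j,q)) * U $$ (j,p)) = (if q = p then 1 else 0)" if "p < N" "q < N" for p q
  proof -
    have "(cadj U * U) $$ (q,p) = (\<Sum>j<N. cadj U $$ (q,j) * U $$ (j,p))"
      using that Uc by (intro mult_entry[of _ N N]) (auto simp: cadj_def)
    also have "\<dots> = (\<Sum>j<N. cnj (U $$ (j,q)) * U $$ (j,p))"
      using that Uc by (intro sum.cong refl) (auto simp: cadj_def)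
    finally show ?thesis using UU that by simp
  qed
  have "(U *\<^sub>v x) \<bullet>c (U *\<^sub>v y) = (\<Sum>j<N. (\<Sum>p<N. U $$ (j,p) * x $ p) * cnj (\<Sum>q<N. U $$ (j,q) * y $ q))"
  proof -
    have "(U *\<^sub>v x) \<bullet>c (U *\<^sub>v y) = (\<Sum>j<N. (U *\<^sub>v x) $ j * cnj ((U *\<^sub>v y) $ j))"
      using Uc x y by (intro cinner_sum[of _ N]) auto
    also have "\<dots> = (\<Sum>j<N. (\<Sum>p<N. U $$ (j,p) * x $ p) * cnj (\<Sum>q<N. U $$ (j,q) * y $ q))"
      using Uc x y by (intro sum.cong refl) (simp add: scalar_prod_def atLeast0LessThan)
    finally show ?thesis .
  qed
  also have "\<dots> = (\<Sum>j<N. \<Sum>p<N. \<Sum>q<N. x $ p * cnj (y $ q) * (cnj (U $$ (j,q)) * U $$ (j,p)))"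
    by (simp add: sum_product cnj_sum mult_ac)
  also have "\<dots> = (\<Sum>p<N. \<Sum>j<N. \<Sum>q<N. x $ p * cnj (y $ q) * (cnj (U $$ (j,q)) * U $$ (j,p)))"
    by (rule sum.swap)
  also have "\<dots> = (\<Sum>p<N. \<Sum>q<N. \<Sum>j<N. x $ p * cnj (y $ q) * (cnj (U $$ (j,q)) * U $$ (j,p)))"
    by (rule sum.cong[OF refl], rule sum.swap)
  also have "\<dots> = (\<Sum>p<N. \<Sum>q<N. if q = p then x $ p * cnj (y $ p) else 0)"
    by (intro sum.cong refl) (simp add: sum_distrib_left[symmetric] ent)
  also have "\<dots> = x \<bullet>c y" using x y by (simp add: cinner_sum[of _ N])
  finally show ?thesis .
qed

lemma cinner_self: assumes x: "x \<in> carrier_vec n" shows "x \<bullet>c x = complex_of_real (\<Sum>i<n. (cmod (x $ i))\<^sup>2)"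
proof -
  have "x \<bullet>c x = (\<Sum>i<n. x $ i * cnj (x $ i))" by (rule cinner_sum[OF x x])
  also have "\<dots> = complex_of_real (\<Sum>i<n. (cmod (x $ i))\<^sup>2)" by (simp only: of_real_sum complex_norm_square)
  finally show ?thesis .
qed

lemma cs_unit:
  assumes x: "x \<in> carrier_vec n" and y: "y \<in> carrier_vec n" and "x \<bullet>c x = 1" "y \<bullet>c y = 1"
  shows "cmod (x \<bullet>c y) \<le> 1"
proof -
  have sx: "(\<Sum>i<n. (cmod (x $ i))\<^sup>2) = 1" using cinner_self[OF x] assms(3)
    by (metis of_real_eq_1_iff)
  have sy: "(\<Sum>i<n. (cmod (y $ i))\<^sup>2) = 1" using cinner_self[OF y] assms(4)
    by (metis of_real_eq_1_iff)
  have "cmod (x \<bullet>c y) = cmod (\<Sum>i<n. x $ i * cnj (y $ i))" using x y by (simp add: cinner_sum)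
  also have "\<dots> \<le> (\<Sum>i<n. cmod (x $ i * cnj (y $ i)))" by (rule norm_sum)
  also have "\<dots> \<le> (\<Sum>i<n. ((cmod (x $ i))\<^sup>2 + (cmod (y $ i))\<^sup>2) / 2)"
  proof (rule sum_mono)
    fix i
    have "0 \<le> (cmod (x $ i) - cmod (y $ i))\<^sup>2" by simp
    then show "cmod (x $ i * cnj (y $ i)) \<le> ((cmod (x $ i))\<^sup>2 + (cmod (y $ i))\<^sup>2) / 2"
      by (simp add: norm_mult power2_eq_square algebra_simps)
  qed
  also have "\<dots> = 1" using sx sy by (simp add: sum_divide_distrib[symmetric] sum.distrib)
  finally show ?thesis .
qed

lemma frob_calc:
  fixes p q :: "nat \<Rightarrow> complex"
  assumes "(\<Sum>r<n. p r * cnj (p r)) = 1" "(\<Sum>r<n. q r * cnj (q r)) = 1"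
  shows "(\<Sum>r<n. \<Sum>c<n. (cmod (p r * cnj (p c) - q r * cnj (q c)))\<^sup>2) = 2 - 2 * (cmod (\<Sum>r<n. q r * cnj (p r)))\<^sup>2"
proof -
  define z where "z = (\<Sum>r<n. q r * cnj (p r))"
  have "complex_of_real (\<Sum>r<n. \<Sum>c<n. (cmod (p r * cnj (p c) - q r * cnj (q c)))\<^sup>2)
     = (\<Sum>r<n. \<Sum>c<n. (p r * cnj (p c) - q r * cnj (q c)) * cnj (p r * cnj (p c) - q r * cnj (q c)))"
    by (simp only: of_real_sum complex_norm_square)
  also have "\<dots> = (\<Sum>r<n. \<Sum>c<n. (p r * cnj (p r)) * (p c * cnj (p c)) + (q r * cnj (q r)) * (q c * cnj (q c))
        - (p r * cnj (q r)) * (q c * cnj (p c)) - (q r * cnj (p r)) * (p c * cnj (q c)))"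
    by (intro sum.cong refl) (simp add: algebra_simps)
  also have "\<dots> = (\<Sum>r<n. p r * cnj (p r)) * (\<Sum>c<n. p c * cnj (p c)) + (\<Sum>r<n. q r * cnj (q r)) * (\<Sum>c<n. q c * cnj (q c))
        - (\<Sum>r<n. p r * cnj (q r)) * (\<Sum>c<n. q c * cnj (p c)) - (\<Sum>r<n. q r * cnj (p r)) * (\<Sum>c<n. p c * cnj (q c))"
    by (simp add: sum_product sum.distrib sum_subtractf)
  also have "\<dots> = 2 - 2 * (z * cnj z)"
  proof -
    have h1: "(\<Sum>r<n. p r * cnj (q r)) = cnj z" by (simp add: z_def cnj_sum mult.commute)
    have h3: "(\<Sum>c<n. q c * cnj (p c)) = z" by (simp add: z_def)
    show ?thesis using assms h1 h3 by (simp add: algebra_simps)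
  qed
  also have "\<dots> = complex_of_real (2 - 2 * (cmod z)\<^sup>2)" using complex_norm_square[of z] by simp
  finally show ?thesis unfolding z_def of_real_eq_iff .
qed

lemma idx_lt: "i < M \<Longrightarrow> j < (N::nat) \<Longrightarrow> i*N + j < M*N"
proof -
  assume "i < M" "j < N"
  then have "i*N + j < Suc i * N" by simp
  also have "\<dots> \<le> M * N" using \<open>i < M\<close> by (intro mult_le_mono1) simp
  finally show ?thesis .
qed

lemma idx_div: "j < (N::nat) \<Longrightarrow> (i*N+j) div N = i"
  by (simp add: add.commute)
lemma idx_mod: "j < (N::nat) \<Longrightarrow> (i*N+j) mod N = j"
  by (simp add: add.commute)

lemma idx_bounds: "r < M*(N::nat) \<Longrightarrow> r div N < M \<and> r mod N < N"
  by (metis less_mult_imp_div_less mod_less_divisor mult.commute mult_zero_left not_less_zero zero_less_iff_neq_zero)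

lemma kron_entry:
  assumes "r < M*N" "s < M*N"
  shows "kron M N (1\<^sub>m M) U $$ (r,s) = (if r div N = s div N then U $$ (r mod N, s mod N) else 0)"
  using assms idx_bounds[of r M N] idx_bounds[of s M N] by (simp add: kron_def)

lemma kron_carrier: "kron M N A B \<in> carrier_mat (M*N) (M*N)"
  by (simp add: kron_def)

lemma kron_orth:
  assumes U: "unitary_mat N U" and r: "r < M*N" and c: "c < M*N"
  shows "(\<Sum>t<M*N. kron M N (1\<^sub>m M) U $$ (r,t) * cnj (kron M N (1\<^sub>m M) U $$ (c,t))) = (if r = c then 1 else 0)"
proof -
  have Uc: "U \<in> carrier_mat N N" and UU: "U * cadj U = 1\<^sub>m N" using U unfolding unitary_mat_def by auto
  have rb: "r div N < M" "r mod N < N" "c div N < M" "c mod N < N" using idx_bounds r c by auto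
  have ent: "(\<Sum>j<N. U $$ (r mod N, j) * cnj (U $$ (c mod N, j))) = (if r mod N = c mod N then 1 else 0)"
  proof -
    have "(U * cadj U) $$ (r mod N, c mod N) = (\<Sum>j<N. U $$ (r mod N, j) * cadj U $$ (j, c mod N))"
      using rb Uc by (intro mult_entry[of _ N N]) (auto simp: cadj_def)
    also have "\<dots> = (\<Sum>j<N. U $$ (r mod N, j) * cnj (U $$ (c mod N, j)))"
      using rb Uc by (intro sum.cong refl) (auto simp: cadj_def)
    finally show ?thesis using UU rb by simp
  qed
  have "(\<Sum>t<M*N. kron M N (1\<^sub>m M) U $$ (r,t) * cnj (kron M N (1\<^sub>m M) U $$ (c,t)))
      = (\<Sum>i<M. \<Sum>j<N. (if r div N = i then U $$ (r mod N, j) else 0) * cnj (if c div N = i then U $$ (c mod N, j) else 0))"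
    by (subst sum_split_mult, intro sum.cong refl)
       (simp add: kron_entry r c idx_lt idx_div idx_mod)
  also have "\<dots> = (\<Sum>i<M. if r div N = i \<and> c div N = i then (\<Sum>j<N. U $$ (r mod N, j) * cnj (U $$ (c mod N, j))) else 0)"
    by (intro sum.cong refl) auto
  also have "\<dots> = (if r div N = c div N then (\<Sum>j<N. U $$ (r mod N, j) * cnj (U $$ (c mod N, j))) else 0)"
  proof (cases "r div N = c div N")
    case True
    then have "(\<Sum>i<M. if r div N = i \<and> c div N = i then (\<Sum>j<N. U $$ (r mod N, j) * cnj (U $$ (c mod N, j))) else 0)
       = (\<Sum>i<M. if r div N = i then (\<Sum>j<N. U $$ (r mod N, j) * cnj (U $$ (c mod N, j))) else 0)"
      by (intro sum.cong refl) auto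
    then show ?thesis using True rb by (simp add: sum.delta)
  next
    case False
    then show ?thesis by (intro trans[OF sum.neutral]) auto
  qed
  also have "\<dots> = (if r = c then 1 else 0)"
  proof -
    have iff: "r = c \<longleftrightarrow> r div N = c div N \<and> r mod N = c mod N" by (metis div_mult_mod_eq)
    show ?thesis using ent iff by auto
  qed
  finally show ?thesis .
qed

lemma rho_diff:
  fixes \<psi> :: "complex vec" and \<rho> :: "complex mat" and \<epsilon> c0 :: real
  assumes U: "unitary_mat N U" and \<psi>: "\<psi> \<in> carrier_vec (M*N)"
    and \<rho>: "\<rho> = complex_of_real \<epsilon> \<cdot>\<^sub>m mat (M*N) (M*N) (\<lambda>(r,c). \<psi> $ r * cnj (\<psi> $ c))
             + complex_of_real c0 \<cdot>\<^sub>m 1\<^sub>m (M*N)"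
  defines "\<phi> \<equiv> (\<lambda>r. \<Sum>s<M*N. kron M N (1\<^sub>m M) U $$ (r,s) * \<psi> $ s)"
  shows "\<rho> - rho_f M N \<rho> U = mat (M*N) (M*N) (\<lambda>(r,c). complex_of_real \<epsilon> * (\<psi> $ r * cnj (\<psi> $ c) - \<phi> r * cnj (\<phi> c)))"
proof (rule eq_matI)
  let ?K = "kron M N (1\<^sub>m M) U"
  have Kc: "?K \<in> carrier_mat (M*N) (M*N)" by (rule kron_carrier)
  have \<rho>c: "\<rho> \<in> carrier_mat (M*N) (M*N)" using \<rho> by simp
  have \<rho>e: "\<rho> $$ (s,t) = complex_of_real \<epsilon> * (\<psi> $ s * cnj (\<psi> $ t)) + complex_of_real c0 * (if s = t then 1 else 0)"
    if "s < M*N" "t < M*N" for s t using that \<rho> by simp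
  fix r c assume "r < dim_row (mat (M*N) (M*N) (\<lambda>(r,c). complex_of_real \<epsilon> * (\<psi> $ r * cnj (\<psi> $ c) - \<phi> r * cnj (\<phi> c))))"
    "c < dim_col (mat (M*N) (M*N) (\<lambda>(r,c). complex_of_real \<epsilon> * (\<psi> $ r * cnj (\<psi> $ c) - \<phi> r * cnj (\<phi> c))))"
  then have r: "r < M*N" and c: "c < M*N" by auto
  have "rho_f M N \<rho> U $$ (r,c) = (\<Sum>t<M*N. (?K * \<rho>) $$ (r,t) * cadj ?K $$ (t,c))"
    unfolding rho_f_def using Kc \<rho>c r c by (intro mult_entry[of _ "M*N" "M*N"]) (auto simp: cadj_def)
  also have "\<dots> = (\<Sum>t<M*N. (\<Sum>s<M*N. ?K $$ (r,s) * \<rho> $$ (s,t)) * cnj (?K $$ (c,t)))"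
  proof (intro sum.cong refl)
    fix t assume t: "t \<in> {..<M*N}"
    have "(?K * \<rho>) $$ (r,t) = (\<Sum>s<M*N. ?K $$ (r,s) * \<rho> $$ (s,t))"
      using t by (intro mult_entry[OF Kc \<rho>c r]) simp
    moreover have "cadj ?K $$ (t,c) = cnj (?K $$ (c,t))" using t c Kc by (simp add: cadj_def)
    ultimately show "(?K * \<rho>) $$ (r,t) * cadj ?K $$ (t,c) = (\<Sum>s<M*N. ?K $$ (r,s) * \<rho> $$ (s,t)) * cnj (?K $$ (c,t))"
      by simp
  qed
  also have "\<dots> = (\<Sum>t<M*N. (complex_of_real \<epsilon> * \<phi> r * cnj (\<psi> $ t) + complex_of_real c0 * ?K $$ (r,t)) * cnj (?K $$ (c,t)))"
  proof (intro sum.cong refl)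
    fix t assume t: "t \<in> {..<M*N}"
    have "(\<Sum>s<M*N. ?K $$ (r,s) * \<rho> $$ (s,t)) = (\<Sum>s<M*N. complex_of_real \<epsilon> * cnj (\<psi> $ t) * (?K $$ (r,s) * \<psi> $ s) + (if s = t then complex_of_real c0 * ?K $$ (r,s) else 0))"
      using t by (intro sum.cong refl) (simp add: \<rho>e algebra_simps)
    also have "\<dots> = complex_of_real \<epsilon> * \<phi> r * cnj (\<psi> $ t) + complex_of_real c0 * ?K $$ (r,t)"
      using t by (simp add: sum.distrib sum_distrib_left \<phi>_def mult_ac)
    finally show "(\<Sum>s<M*N. ?K $$ (r,s) * \<rho> $$ (s,t)) * cnj (?K $$ (c,t)) = (complex_of_real \<epsilon> * \<phi> r * cnj (\<psi> $ t) + complex_of_real c0 * ?K $$ (r,t)) * cnj (?K $$ (c,t))"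
      by simp
  qed
  also have "\<dots> = complex_of_real \<epsilon> * \<phi> r * (\<Sum>t<M*N. cnj (?K $$ (c,t) * \<psi> $ t)) + complex_of_real c0 * (\<Sum>t<M*N. ?K $$ (r,t) * cnj (?K $$ (c,t)))"
    by (simp add: algebra_simps sum.distrib sum_distrib_left)
  also have "(\<Sum>t<M*N. cnj (?K $$ (c,t) * \<psi> $ t)) = cnj (\<phi> c)"
    by (simp add: \<phi>_def cnj_sum)
  also have "(\<Sum>t<M*N. ?K $$ (r,t) * cnj (?K $$ (c,t))) = (if r = c then 1 else 0)"
    by (rule kron_orth[OF U r c])
  finally have "rho_f M N \<rho> U $$ (r,c) = complex_of_real \<epsilon> * \<phi> r * cnj (\<phi> c) + complex_of_real c0 * (if r = c then 1 else 0)" .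
  moreover have "rho_f M N \<rho> U \<in> carrier_mat (M*N) (M*N)" unfolding rho_f_def using Kc \<rho>c by (auto simp: cadj_def)
  ultimately show "(\<rho> - rho_f M N \<rho> U) $$ (r,c) = mat (M*N) (M*N) (\<lambda>(r,c). complex_of_real \<epsilon> * (\<psi> $ r * cnj (\<psi> $ c) - \<phi> r * cnj (\<phi> c))) $$ (r,c)"
    using r c \<rho>e[OF r c] by (simp add: algebra_simps)
next
  show "dim_row (\<rho> - rho_f M N \<rho> U) = dim_row (mat (M*N) (M*N) (\<lambda>(r,c). complex_of_real \<epsilon> * (\<psi> $ r * cnj (\<psi> $ c) - \<phi> r * cnj (\<phi> c))))"
    unfolding rho_f_def using \<rho> by (simp add: cadj_def kron_def)
  show "dim_col (\<rho> - rho_f M N \<rho> U) = dim_col (mat (M*N) (M*N) (\<lambda>(r,c). complex_of_real \<epsilon> * (\<psi> $ r * cnj (\<psi> $ c) - \<phi> r * cnj (\<phi> c))))"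
    unfolding rho_f_def using \<rho> by (simp add: cadj_def kron_def)
qed

locale thm_ctx =
  fixes M N :: nat and \<epsilon> :: real and a :: "nat \<Rightarrow> real"
    and e f :: "nat \<Rightarrow> complex vec" and \<psi> :: "complex vec" and \<rho> :: "complex mat"
  assumes MN: "M \<ge> N" and N1: "N \<ge> 1"
    and eps0: "0 < \<epsilon>" and eps1: "\<epsilon> \<le> 1"
    and a0: "\<forall>k<N. a k \<ge> 0" and asum: "(\<Sum>k<N. (a k)\<^sup>2) = 1"
    and e1: "\<forall>k<N. e k \<in> carrier_vec M" and e2: "\<forall>k<N. \<forall>l<N. e k \<bullet>c e l = (if k = l then 1 else 0)"
    and f1: "\<forall>k<N. f k \<in> carrier_vec N" and f2: "\<forall>k<N. \<forall>l<N. f k \<bullet>c f l = (if k = l then 1 else 0)"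
    and psi: "\<psi> = vec (M*N) (\<lambda>r. \<Sum>k<N. complex_of_real (a k) * (e k $ (r div N)) * (f k $ (r mod N)))"
    and rho: "\<rho> = complex_of_real \<epsilon> \<cdot>\<^sub>m mat (M*N) (M*N) (\<lambda>(r,c). \<psi> $ r * cnj (\<psi> $ c))
             + complex_of_real ((1 - \<epsilon>) / real (M*N)) \<cdot>\<^sub>m 1\<^sub>m (M*N)"
begin

lemma Npos: "N > 0" using N1 by simp

lemma psi_idx: "i < M \<Longrightarrow> j < N \<Longrightarrow> \<psi> $ (i*N+j) = (\<Sum>k<N. complex_of_real (a k) * (e k $ i) * (f k $ j))"
  using psi by (simp add: idx_lt idx_div idx_mod)

lemma Kpsi:
  assumes Uc: "U \<in> carrier_mat N N" and r: "r < M*N"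
  shows "(\<Sum>s<M*N. kron M N (1\<^sub>m M) U $$ (r,s) * \<psi> $ s) = (\<Sum>k<N. complex_of_real (a k) * e k $ (r div N) * (U *\<^sub>v f k) $ (r mod N))"
proof -
  have rb: "r div N < M" "r mod N < N" using idx_bounds r by auto
  have "(\<Sum>s<M*N. kron M N (1\<^sub>m M) U $$ (r,s) * \<psi> $ s) = (\<Sum>i<M. \<Sum>j<N. (if r div N = i then U $$ (r mod N, j) else 0) * (\<Sum>k<N. complex_of_real (a k) * (e k $ i) * (f k $ j)))"
    by (subst sum_split_mult, intro sum.cong refl) (simp add: kron_entry r idx_lt idx_div idx_mod psi_idx)
  also have "\<dots> = (\<Sum>i<M. if i = r div N then (\<Sum>j<N. U $$ (r mod N, j) * (\<Sum>k<N. complex_of_real (a k) * (e k $ i) * (f k $ j))) else 0)"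
    by (intro sum.cong refl) auto
  also have "\<dots> = (\<Sum>j<N. U $$ (r mod N, j) * (\<Sum>k<N. complex_of_real (a k) * (e k $ (r div N)) * (f k $ j)))"
    using rb by (simp add: sum.delta')
  also have "\<dots> = (\<Sum>k<N. \<Sum>j<N. complex_of_real (a k) * e k $ (r div N) * (U $$ (r mod N, j) * f k $ j))"
    by (simp add: sum_distrib_left mult_ac) (rule sum.swap)
  also have "\<dots> = (\<Sum>k<N. complex_of_real (a k) * e k $ (r div N) * (U *\<^sub>v f k) $ (r mod N))"
  proof (intro sum.cong refl)
    fix k assume "k \<in> {..<N}"
    then show "(\<Sum>j<N. complex_of_real (a k) * e k $ (r div N) * (U $$ (r mod N, j) * f k $ j)) = complex_of_real (a k) * e k $ (r div N) * (U *\<^sub>v f k) $ (r mod N)"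
      using f1 Uc rb by (auto simp: scalar_prod_def atLeast0LessThan sum_distrib_left mult_ac)
  qed
  finally show ?thesis .
qed

lemma fu_formula:
  assumes U: "unitary_mat N U"
  shows "fu_dist M N \<rho> U = \<epsilon> * sqrt (1 - (cmod (\<Sum>k<N. complex_of_real ((a k)\<^sup>2) * ((U *\<^sub>v f k) \<bullet>c f k)))\<^sup>2)"
proof -
  have Uc: "U \<in> carrier_mat N N" using U unfolding unitary_mat_def by auto
  define g where "g = (\<lambda>k. U *\<^sub>v f k)"
  have g1: "\<forall>k<N. g k \<in> carrier_vec N" using Uc f1 by (auto simp: g_def)
  define \<phi> where "\<phi> = (\<lambda>r. \<Sum>s<M*N. kron M N (1\<^sub>m M) U $$ (r,s) * \<psi> $ s)"
  define z where "z = (\<Sum>k<N. complex_of_real ((a k)\<^sup>2) * (g k \<bullet>c f k))"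
  have \<psi>c: "\<psi> \<in> carrier_vec (M*N)" using psi by simp
  have \<phi>e: "\<phi> r = (\<Sum>k<N. complex_of_real (a k) * e k $ (r div N) * g k $ (r mod N))" if "r < M*N" for r
    using Kpsi[OF Uc that] by (simp add: \<phi>_def g_def)
  have \<psi>e: "\<psi> $ r = (\<Sum>k<N. complex_of_real (a k) * e k $ (r div N) * f k $ (r mod N))" if "r < M*N" for r
    using psi that by simp
  have n1: "(\<Sum>r<M*N. \<psi> $ r * cnj (\<psi> $ r)) = 1"
  proof -
    have "(\<Sum>r<M*N. \<psi> $ r * cnj (\<psi> $ r)) = (\<Sum>k<N. complex_of_real ((a k)\<^sup>2) * (f k \<bullet>c f k))"
      using ip_tensor[OF e1 e2 f1 f1, of a] by (simp add: \<psi>e)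
    also have "\<dots> = (\<Sum>k<N. complex_of_real ((a k)\<^sup>2))" using f2 by simp
    also have "\<dots> = 1" using asum by (metis of_real_1 of_real_sum)
    finally show ?thesis .
  qed
  have n2: "(\<Sum>r<M*N. \<phi> r * cnj (\<phi> r)) = 1"
  proof -
    have "(\<Sum>r<M*N. \<phi> r * cnj (\<phi> r)) = (\<Sum>k<N. complex_of_real ((a k)\<^sup>2) * (g k \<bullet>c g k))"
      using ip_tensor[OF e1 e2 g1 g1, of a] by (simp add: \<phi>e)
    also have "\<dots> = (\<Sum>k<N. complex_of_real ((a k)\<^sup>2))" using f2 f1 unitary_ip[OF U] by (simp add: g_def)
    also have "\<dots> = 1" using asum by (metis of_real_1 of_real_sum)
    finally show ?thesis .
  qed
  have zz: "(\<Sum>r<M*N. \<phi> r * cnj (\<psi> $ r)) = z"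
    using ip_tensor[OF e1 e2 g1 f1, of a] by (simp add: \<phi>e \<psi>e z_def)
  have D: "\<rho> - rho_f M N \<rho> U = mat (M*N) (M*N) (\<lambda>(r,c). complex_of_real \<epsilon> * (\<psi> $ r * cnj (\<psi> $ c) - \<phi> r * cnj (\<phi> c)))"
    unfolding \<phi>_def by (rule rho_diff[OF U \<psi>c rho])
  have "frob_norm (\<rho> - rho_f M N \<rho> U) = sqrt (\<Sum>r<M*N. \<Sum>c<M*N. (cmod (complex_of_real \<epsilon> * (\<psi> $ r * cnj (\<psi> $ c) - \<phi> r * cnj (\<phi> c))))\<^sup>2)"
    unfolding D frob_norm_def by simp
  also have "\<dots> = sqrt (\<epsilon>\<^sup>2 * (\<Sum>r<M*N. \<Sum>c<M*N. (cmod (\<psi> $ r * cnj (\<psi> $ c) - \<phi> r * cnj (\<phi> c)))\<^sup>2))"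
    by (simp add: norm_mult power_mult_distrib sum_distrib_left)
  also have "\<dots> = sqrt (\<epsilon>\<^sup>2 * (2 - 2 * (cmod z)\<^sup>2))"
    using frob_calc[where n="M*N" and p="\<lambda>r. \<psi> $ r" and q=\<phi>, OF n1 n2] zz by simp
  also have "\<dots> = \<epsilon> * sqrt 2 * sqrt (1 - (cmod z)\<^sup>2)"
  proof -
    have "\<epsilon>\<^sup>2 * (2 - 2 * (cmod z)\<^sup>2) = \<epsilon>\<^sup>2 * (2 * (1 - (cmod z)\<^sup>2))" by simp
    then show ?thesis using eps0 by (simp only: real_sqrt_mult real_sqrt_abs abs_of_pos)
  qed
  finally show ?thesis unfolding fu_dist_def z_def g_def by simp
qed

end

lemma lincomb_ip:
  assumes "u \<in> carrier_vec N" "\<forall>k<N. f k \<in> carrier_vec N"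
  shows "(\<Sum>j<N. (\<Sum>k<N. c k * f k $ j) * cnj (u $ j)) = (\<Sum>k<N. c k * (f k \<bullet>c u))"
proof -
  have "(\<Sum>j<N. (\<Sum>k<N. c k * f k $ j) * cnj (u $ j)) = (\<Sum>k<N. \<Sum>j<N. c k * (f k $ j * cnj (u $ j)))"
  proof -
    have "(\<Sum>j<N. (\<Sum>k<N. c k * f k $ j) * cnj (u $ j)) = (\<Sum>j<N. \<Sum>k<N. c k * (f k $ j * cnj (u $ j)))"
      by (intro sum.cong refl) (simp add: sum_distrib_left sum_distrib_right mult_ac)
    also have "\<dots> = (\<Sum>k<N. \<Sum>j<N. c k * (f k $ j * cnj (u $ j)))" by (rule sum.swap)
    finally show ?thesis .
  qed
  also have "\<dots> = (\<Sum>k<N. c k * (f k \<bullet>c u))"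
    using assms by (intro sum.cong refl) (simp add: cinner_sum[of _ N] sum_distrib_left)
  finally show ?thesis .
qed

lemma cinner_swap:
  assumes "x \<in> carrier_vec n" "y \<in> carrier_vec n"
  shows "y \<bullet>c x = cnj (x \<bullet>c y)"
  using assms by (simp add: cinner_sum[of _ n] cnj_sum mult.commute)

context thm_ctx begin

lemma ptrace_eq:
  "ptrace_A M N \<rho> = fdiag N f (complex_of_real ((1 - \<epsilon>) / real (M*N) * real M)) (\<lambda>k. complex_of_real (\<epsilon> * (a k)\<^sup>2))"
proof (rule eq_matI)
  fix j j' assume "j < dim_row (fdiag N f (complex_of_real ((1 - \<epsilon>) / real (M*N) * real M)) (\<lambda>k. complex_of_real (\<epsilon> * (a k)\<^sup>2)))"
    "j' < dim_col (fdiag N f (complex_of_real ((1 - \<epsilon>) / real (M*N) * real M)) (\<lambda>k. complex_of_real (\<epsilon> * (a k)\<^sup>2)))"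
  then have j: "j < N" "j' < N" by (auto simp: fdiag_def)
  define c0 where "c0 = (1 - \<epsilon>) / real (M*N)"
  have "ptrace_A M N \<rho> $$ (j,j') = (\<Sum>i<M. \<rho> $$ (i*N+j, i*N+j'))"
    using j by (simp add: ptrace_A_def)
  also have "\<dots> = (\<Sum>i<M. complex_of_real \<epsilon> * ((\<Sum>k<N. complex_of_real (a k) * (e k $ i) * (f k $ j)) * cnj (\<Sum>k<N. complex_of_real (a k) * (e k $ i) * (f k $ j')))
       + complex_of_real c0 * (if j = j' then 1 else 0))"
    using j by (intro sum.cong refl) (simp add: rho idx_lt psi_idx c0_def)
  also have "\<dots> = complex_of_real \<epsilon> * (\<Sum>k<N. complex_of_real ((a k)\<^sup>2) * f k $ j * cnj (f k $ j'))
       + complex_of_real (c0 * real M) * (if j = j' then 1 else 0)"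
  proof -
    have ipe: "(\<Sum>i<M. complex_of_real \<epsilon> * ((\<Sum>k<N. complex_of_real (a k) * (e k $ i) * (f k $ j)) * cnj (\<Sum>k<N. complex_of_real (a k) * (e k $ i) * (f k $ j'))))
       = complex_of_real \<epsilon> * (\<Sum>k<N. complex_of_real ((a k)\<^sup>2) * f k $ j * cnj (f k $ j'))"
      by (simp only: sum_distrib_left[symmetric] ip_e[OF e1 e2])
    show ?thesis unfolding sum.distrib ipe by simp
  qed
  also have "\<dots> = fdiag N f (complex_of_real ((1 - \<epsilon>) / real (M*N) * real M)) (\<lambda>k. complex_of_real (\<epsilon> * (a k)\<^sup>2)) $$ (j,j')"
    using j by (simp add: fdiag_entry c0_def sum_distrib_left mult_ac)
  finally show "ptrace_A M N \<rho> $$ (j,j') = fdiag N f (complex_of_real ((1 - \<epsilon>) / real (M*N) * real M)) (\<lambda>k. complex_of_real (\<epsilon> * (a k)\<^sup>2)) $$ (j,j')" .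
qed (auto simp: ptrace_A_def fdiag_def)

lemma U0_cyclic:
  assumes w: "\<forall>k. cmod (w k) = 1"
  shows "cyclic_unitary M N \<rho> (fdiag N f 1 (\<lambda>k. w k - 1))"
  unfolding cyclic_unitary_def ptrace_eq
  using fdiag_unitary[OF f1 f2 w] fdiag_commute[OF f1 f2] by simp

lemma U0_inner:
  assumes k: "k < N"
  shows "(fdiag N f 1 (\<lambda>k. w k - 1) *\<^sub>v f k) \<bullet>c f k = w k"
proof -
  have fk: "f k \<in> carrier_vec N" using f1 k by simp
  have ip: "(\<Sum>p<N. f k $ p * cnj (f l $ p)) = (if k = l then 1 else 0)" if "l < N" for l
    using f1 f2 k that cinner_sum[of "f k" N "f l"] by simp
  have "fdiag N f 1 (\<lambda>k. w k - 1) *\<^sub>v f k = vec N (\<lambda>j. 1 * f k $ j + (\<Sum>l<N. (w l - 1) * (\<Sum>p<N. f k $ p * cnj (f l $ p)) * f l $ j))"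
    by (rule fdiag_mulv[OF fk])
  also have "\<dots> = vec N (\<lambda>j. w k * f k $ j)"
  proof (rule eq_vecI)
    fix j assume "j < dim_vec (vec N (\<lambda>j. w k * f k $ j))"
    have "(\<Sum>l<N. (w l - 1) * (\<Sum>p<N. f k $ p * cnj (f l $ p)) * f l $ j) = (\<Sum>l<N. if l = k then (w k - 1) * f k $ j else 0)"
      by (intro sum.cong refl) (auto simp: ip)
    also have "\<dots> = (w k - 1) * f k $ j" using k by simp
    finally show "vec N (\<lambda>j. 1 * f k $ j + (\<Sum>l<N. (w l - 1) * (\<Sum>p<N. f k $ p * cnj (f l $ p)) * f l $ j)) $ j = vec N (\<lambda>j. w k * f k $ j) $ j"
      using \<open>j < dim_vec _\<close> by (simp add: algebra_simps)
  qed simp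
  also have "\<dots> \<bullet>c f k = w k * (f k \<bullet>c f k)"
    using fk by (simp add: cinner_sum[of _ N] sum_distrib_left mult_ac)
  also have "\<dots> = w k" using f2 k by simp
  finally show ?thesis .
qed

lemma two_le_one:
  assumes "l < N" "m < N" "l \<noteq> m"
  shows "(a l)\<^sup>2 + (a m)\<^sup>2 \<le> 1"
proof -
  have "(\<Sum>k\<in>{l,m}. (a k)\<^sup>2) \<le> (\<Sum>k<N. (a k)\<^sup>2)"
    using assms by (intro sum_mono2) auto
  then show ?thesis using assms asum by simp
qed

lemma eigen_phase:
  assumes U: "cyclic_unitary M N \<rho> U" and m: "m < N" and am: "2 * (a m)\<^sup>2 > 1"
  shows "cmod ((U *\<^sub>v f m) \<bullet>c f m) = 1"
proof -
  have Uu: "unitary_mat N U" and comm: "ptrace_A M N \<rho> * U = U * ptrace_A M N \<rho>"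
    using U unfolding cyclic_unitary_def by auto
  have Uc: "U \<in> carrier_mat N N" using Uu unfolding unitary_mat_def by auto
  define \<gamma> where "\<gamma> = complex_of_real ((1 - \<epsilon>) / real (M*N) * real M)"
  define \<alpha> where "\<alpha> = (\<lambda>k. complex_of_real (\<epsilon> * (a k)\<^sup>2))"
  define R where "R = fdiag N f \<gamma> \<alpha>"
  have Rc: "R \<in> carrier_mat N N" by (simp add: R_def)
  have comm': "R * U = U * R" using comm ptrace_eq by (simp add: R_def \<gamma>_def \<alpha>_def)
  have fm: "f m \<in> carrier_vec N" using f1 m by simp
  define v where "v = U *\<^sub>v f m"
  have vc: "v \<in> carrier_vec N" using Uc fm by (simp add: v_def)
  have vv: "v \<bullet>c v = 1" using unitary_ip[OF Uu fm fm] f2 m by (simp add: v_def)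
  define \<beta> where "\<beta> = (\<lambda>k. \<Sum>p<N. v $ p * cnj (f k $ p))"
  have \<beta>ip: "\<beta> k = v \<bullet>c f k" if "k < N" for k using vc f1 that by (simp add: \<beta>_def cinner_sum[of _ N])
  have ipm: "(\<Sum>p<N. f m $ p * cnj (f k $ p)) = (if m = k then 1 else 0)" if "k < N" for k
    using f1 f2 m that cinner_sum[of "f m" N "f k"] by simp
  have Rfm: "R *\<^sub>v f m = (\<gamma> + \<alpha> m) \<cdot>\<^sub>v f m"
  proof -
    have "R *\<^sub>v f m = vec N (\<lambda>j. \<gamma> * f m $ j + (\<Sum>k<N. \<alpha> k * (\<Sum>p<N. f m $ p * cnj (f k $ p)) * f k $ j))"
      unfolding R_def by (rule fdiag_mulv[OF fm])
    also have "\<dots> = (\<gamma> + \<alpha> m) \<cdot>\<^sub>v f m"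
    proof (rule eq_vecI)
      fix j assume j: "j < dim_vec ((\<gamma> + \<alpha> m) \<cdot>\<^sub>v f m)"
      have "(\<Sum>k<N. \<alpha> k * (\<Sum>p<N. f m $ p * cnj (f k $ p)) * f k $ j) = (\<Sum>k<N. if k = m then \<alpha> m * f m $ j else 0)"
        by (intro sum.cong refl) (auto simp: ipm)
      also have "\<dots> = \<alpha> m * f m $ j" using m by simp
      finally show "vec N (\<lambda>j. \<gamma> * f m $ j + (\<Sum>k<N. \<alpha> k * (\<Sum>p<N. f m $ p * cnj (f k $ p)) * f k $ j)) $ j = ((\<gamma> + \<alpha> m) \<cdot>\<^sub>v f m) $ j"
        using j fm by (simp add: algebra_simps)
    qed (use fm in simp)
    finally show ?thesis .
  qed
  have "R *\<^sub>v v = (\<gamma> + \<alpha> m) \<cdot>\<^sub>v v"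
  proof -
    have "R *\<^sub>v v = (R * U) *\<^sub>v f m" unfolding v_def using Rc Uc fm by simp
    also have "\<dots> = (U * R) *\<^sub>v f m" using comm' by simp
    also have "\<dots> = U *\<^sub>v (R *\<^sub>v f m)" using Rc Uc fm by simp
    also have "\<dots> = (\<gamma> + \<alpha> m) \<cdot>\<^sub>v v" unfolding Rfm v_def by (rule mult_mat_vec[OF Uc fm])
    finally show ?thesis .
  qed
  moreover have "R *\<^sub>v v = vec N (\<lambda>j. \<gamma> * v $ j + (\<Sum>k<N. \<alpha> k * \<beta> k * f k $ j))"
    unfolding R_def \<beta>_def by (rule fdiag_mulv[OF vc])
  ultimately have E: "(\<Sum>k<N. \<alpha> k * \<beta> k * f k $ j) = \<alpha> m * v $ j" if "j < N" for j
  proof -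
    assume h1: "R *\<^sub>v v = (\<gamma> + \<alpha> m) \<cdot>\<^sub>v v" and h2: "R *\<^sub>v v = vec N (\<lambda>j. \<gamma> * v $ j + (\<Sum>k<N. \<alpha> k * \<beta> k * f k $ j))"
    have "((\<gamma> + \<alpha> m) \<cdot>\<^sub>v v) $ j = vec N (\<lambda>j. \<gamma> * v $ j + (\<Sum>k<N. \<alpha> k * \<beta> k * f k $ j)) $ j"
      using h1 h2 by simp
    then show ?thesis using that vc by (simp add: algebra_simps)
  qed
  have \<beta>0: "\<beta> l = 0" if l: "l < N" "l \<noteq> m" for l
  proof -
    have fl: "f l \<in> carrier_vec N" using f1 l by simp
    have "(\<Sum>j<N. (\<Sum>k<N. \<alpha> k * \<beta> k * f k $ j) * cnj (f l $ j)) = (\<Sum>j<N. \<alpha> m * v $ j * cnj (f l $ j))"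
      by (intro sum.cong refl) (simp add: E)
    moreover have "(\<Sum>j<N. (\<Sum>k<N. \<alpha> k * \<beta> k * f k $ j) * cnj (f l $ j)) = (\<Sum>k<N. \<alpha> k * \<beta> k * (f k \<bullet>c f l))"
      by (rule lincomb_ip[OF fl f1])
    moreover have "(\<Sum>k<N. \<alpha> k * \<beta> k * (f k \<bullet>c f l)) = \<alpha> l * \<beta> l"
    proof -
      have "(\<Sum>k<N. \<alpha> k * \<beta> k * (f k \<bullet>c f l)) = (\<Sum>k<N. if k = l then \<alpha> l * \<beta> l else 0)"
        using f2 l by (intro sum.cong refl) auto
      then show ?thesis using l by simp
    qed
    moreover have "(\<Sum>j<N. \<alpha> m * v $ j * cnj (f l $ j)) = \<alpha> m * \<beta> l"
      by (simp add: \<beta>_def sum_distrib_left mult_ac)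
    ultimately have "(\<alpha> l - \<alpha> m) * \<beta> l = 0" by (simp add: algebra_simps)
    moreover have "\<alpha> l \<noteq> \<alpha> m"
    proof -
      have "(a l)\<^sup>2 < (a m)\<^sup>2" using two_le_one[OF l(1) m l(2)] am by simp
      then have "\<epsilon> * (a l)\<^sup>2 \<noteq> \<epsilon> * (a m)\<^sup>2" using eps0 by simp
      then show ?thesis by (simp only: \<alpha>_def of_real_eq_iff) simp
    qed
    ultimately show ?thesis by simp
  qed
  have "(\<Sum>j<N. (\<Sum>k<N. \<alpha> k * \<beta> k * f k $ j) * cnj (v $ j)) = (\<Sum>j<N. \<alpha> m * v $ j * cnj (v $ j))"
    by (intro sum.cong refl) (simp add: E)
  moreover have "(\<Sum>j<N. (\<Sum>k<N. \<alpha> k * \<beta> k * f k $ j) * cnj (v $ j)) = (\<Sum>k<N. \<alpha> k * \<beta> k * (f k \<bullet>c v))"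
    by (rule lincomb_ip[OF vc f1])
  moreover have "(\<Sum>k<N. \<alpha> k * \<beta> k * (f k \<bullet>c v)) = \<alpha> m * \<beta> m * cnj (\<beta> m)"
  proof -
    have "(\<Sum>k<N. \<alpha> k * \<beta> k * (f k \<bullet>c v)) = (\<Sum>k<N. if k = m then \<alpha> m * \<beta> m * cnj (\<beta> m) else 0)"
    proof (intro sum.cong refl)
      fix k assume k: "k \<in> {..<N}"
      have "f k \<bullet>c v = cnj (\<beta> k)" using k f1 vc \<beta>ip[of k] cinner_swap[of v N "f k"] by simp
      then show "\<alpha> k * \<beta> k * (f k \<bullet>c v) = (if k = m then \<alpha> m * \<beta> m * cnj (\<beta> m) else 0)"
        using \<beta>0[of k] k by auto
    qed
    then show ?thesis using m by simp
  qed
  moreover have "(\<Sum>j<N. \<alpha> m * v $ j * cnj (v $ j)) = \<alpha> m"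
    using vv vc by (simp add: cinner_sum[of _ N] sum_distrib_left[symmetric] mult.assoc)
  ultimately have "\<alpha> m * (\<beta> m * cnj (\<beta> m)) = \<alpha> m * 1" by (simp add: mult_ac)
  moreover have "\<alpha> m \<noteq> 0" using eps0 am by (auto simp: \<alpha>_def)
  ultimately have "\<beta> m * cnj (\<beta> m) = 1" by simp
  then have "(cmod (\<beta> m))\<^sup>2 = 1" by (metis complex_norm_square of_real_eq_1_iff)
  then have "cmod (\<beta> m) = 1" using norm_ge_zero[of "\<beta> m"] by (auto simp: power2_eq_1_iff)
  then show ?thesis using \<beta>ip[OF m] by (simp add: v_def)
qed

end

lemma key_alg:
  fixes x :: real
  assumes "0 \<le> x" "x\<^sup>2 \<le> 1"
  shows "sqrt (1 - (2 * x\<^sup>2 - 1)\<^sup>2) = 2 * x * sqrt (1 - x\<^sup>2)"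
proof -
  have "1 - (2 * x\<^sup>2 - 1)\<^sup>2 = (2 * x * sqrt (1 - x\<^sup>2))\<^sup>2"
    using assms by (simp add: power_mult_distrib power2_eq_square algebra_simps)
  moreover have "2 * x * sqrt (1 - x\<^sup>2) \<ge> 0" using assms by simp
  ultimately show ?thesis by simp
qed

context thm_ctx begin

lemma main:
  "(\<exists>U. cyclic_unitary M N \<rho> U \<and> fu_dist M N \<rho> U = d_max M N \<rho>) \<and>
   d_max M N \<rho> = (if (Max (a ` {..<N}))\<^sup>2 \<le> 1/2 then \<epsilon> else 2 * \<epsilon> * Max (a ` {..<N}) * sqrt (1 - (Max (a ` {..<N}))\<^sup>2))"
proof -
  define am where "am = Max (a ` {..<N})"
  have "0 \<in> {..<N}" using N1 by simp
  then have fin: "finite (a ` {..<N})" "a ` {..<N} \<noteq> {}" by auto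
  obtain m where m: "m < N" "a m = am" using Max_in[OF fin] unfolding am_def by auto
  have amax: "a k \<le> am" if "k < N" for k unfolding am_def using fin that by (intro Max_ge) auto
  have am0: "0 \<le> am" using a0 m by auto
  have am1: "am\<^sup>2 \<le> 1"
  proof -
    have "(a m)\<^sup>2 \<le> (\<Sum>k<N. (a k)\<^sup>2)" using m by (intro member_le_sum) auto
    then show ?thesis using asum m by simp
  qed
  have asq: "(a k)\<^sup>2 \<le> am\<^sup>2" if "k < N" for k using a0 that amax by (intro power_mono) auto
  define D where "D = (if am\<^sup>2 \<le> 1/2 then \<epsilon> else 2 * \<epsilon> * am * sqrt (1 - am\<^sup>2))"
  have rest: "(\<Sum>k\<in>{..<N} - {m}. (a k)\<^sup>2) = 1 - am\<^sup>2"
    using sum.remove[of "{..<N}" m "\<lambda>k. (a k)\<^sup>2"] m asum by simp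
  have upper: "fu_dist M N \<rho> U \<le> D" if U: "cyclic_unitary M N \<rho> U" for U
  proof -
    have Uu: "unitary_mat N U" using U unfolding cyclic_unitary_def by auto
    have Uc: "U \<in> carrier_mat N N" using Uu unfolding unitary_mat_def by auto
    define \<beta> where "\<beta> = (\<lambda>k. (U *\<^sub>v f k) \<bullet>c f k)"
    define z where "z = (\<Sum>k<N. complex_of_real ((a k)\<^sup>2) * \<beta> k)"
    have fu: "fu_dist M N \<rho> U = \<epsilon> * sqrt (1 - (cmod z)\<^sup>2)"
      using fu_formula[OF Uu] by (simp add: z_def \<beta>_def)
    show ?thesis
    proof (cases "am\<^sup>2 \<le> 1/2")
      case True
      have "sqrt (1 - (cmod z)\<^sup>2) \<le> 1" by simp
      then have "\<epsilon> * sqrt (1 - (cmod z)\<^sup>2) \<le> \<epsilon> * 1" using eps0 by (intro mult_left_mono) auto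
      then show ?thesis using True by (simp add: fu D_def)
    next
      case False
      have b1: "cmod (\<beta> k) \<le> 1" if "k < N" for k
      proof -
        have fk: "f k \<in> carrier_vec N" using f1 that by simp
        have "(U *\<^sub>v f k) \<bullet>c (U *\<^sub>v f k) = 1" using unitary_ip[OF Uu fk fk] f2 that by simp
        moreover have "f k \<bullet>c f k = 1" using f2 that by simp
        ultimately show ?thesis unfolding \<beta>_def using Uc fk by (intro cs_unit[of _ N]) auto
      qed
      have bm: "cmod (\<beta> m) = 1" unfolding \<beta>_def
        using eigen_phase[OF U m(1)] False m by simp
      have zs: "z = complex_of_real ((a m)\<^sup>2) * \<beta> m + (\<Sum>k\<in>{..<N} - {m}. complex_of_real ((a k)\<^sup>2) * \<beta> k)"
        unfolding z_def using sum.remove[of "{..<N}" m "\<lambda>k. complex_of_real ((a k)\<^sup>2) * \<beta> k"] m(1) by simp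
      have "cmod (\<Sum>k\<in>{..<N} - {m}. complex_of_real ((a k)\<^sup>2) * \<beta> k) \<le> (\<Sum>k\<in>{..<N} - {m}. cmod (complex_of_real ((a k)\<^sup>2) * \<beta> k))"
        by (rule norm_sum)
      also have "\<dots> \<le> (\<Sum>k\<in>{..<N} - {m}. (a k)\<^sup>2)"
      proof (rule sum_mono)
        fix k assume "k \<in> {..<N} - {m}"
        then have "cmod (\<beta> k) \<le> 1" using b1 by auto
        then show "cmod (complex_of_real ((a k)\<^sup>2) * \<beta> k) \<le> (a k)\<^sup>2"
          by (simp only: norm_mult norm_of_real) (simp add: mult_left_le)
      qed
      finally have r1: "cmod (\<Sum>k\<in>{..<N} - {m}. complex_of_real ((a k)\<^sup>2) * \<beta> k) \<le> 1 - am\<^sup>2" using rest by simp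
      have "cmod (complex_of_real ((a m)\<^sup>2) * \<beta> m) = am\<^sup>2" using bm m by (simp only: norm_mult norm_of_real) simp
      then have zb: "2 * am\<^sup>2 - 1 \<le> cmod z"
        using norm_diff_ineq[of "complex_of_real ((a m)\<^sup>2) * \<beta> m" "\<Sum>k\<in>{..<N} - {m}. complex_of_real ((a k)\<^sup>2) * \<beta> k"] r1 zs
        by simp
      have "(2 * am\<^sup>2 - 1)\<^sup>2 \<le> (cmod z)\<^sup>2" using zb False by (intro power_mono) auto
      then have "sqrt (1 - (cmod z)\<^sup>2) \<le> sqrt (1 - (2 * am\<^sup>2 - 1)\<^sup>2)" by (intro real_sqrt_le_mono) simp
      also have "\<dots> = 2 * am * sqrt (1 - am\<^sup>2)" by (rule key_alg[OF am0 am1])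
      finally have "\<epsilon> * sqrt (1 - (cmod z)\<^sup>2) \<le> \<epsilon> * (2 * am * sqrt (1 - am\<^sup>2))"
        using eps0 by (intro mult_left_mono) auto
      then show ?thesis using False by (simp add: fu D_def mult_ac)
    qed
  qed
  have attain: "\<exists>U. cyclic_unitary M N \<rho> U \<and> fu_dist M N \<rho> U = D"
  proof -
    have gen: "fu_dist M N \<rho> (fdiag N f 1 (\<lambda>k. w k - 1)) = \<epsilon> * sqrt (1 - (cmod (\<Sum>k<N. complex_of_real ((a k)\<^sup>2) * w k))\<^sup>2)"
      if w: "\<forall>k. cmod (w k) = 1" for w
    proof -
      have Uu: "unitary_mat N (fdiag N f 1 (\<lambda>k. w k - 1))" using U0_cyclic[OF w] unfolding cyclic_unitary_def by auto
      have eq: "(\<Sum>k<N. complex_of_real ((a k)\<^sup>2) * ((fdiag N f 1 (\<lambda>k. w k - 1) *\<^sub>v f k) \<bullet>c f k))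
          = (\<Sum>k<N. complex_of_real ((a k)\<^sup>2) * w k)"
        by (intro sum.cong refl) (simp add: U0_inner)
      show ?thesis using fu_formula[OF Uu] unfolding eq .

    qed
    show ?thesis
    proof (cases "am\<^sup>2 \<le> 1/2")
      case True
      have "\<forall>k<N. 2 * (a k)\<^sup>2 \<le> (\<Sum>k<N. (a k)\<^sup>2)" using asq True asum by force
      then obtain w where w: "\<forall>k. cmod (w k) = 1" "(\<Sum>k<N. complex_of_real ((a k)\<^sup>2) * w k) = 0"
        using polygon_phases[of N "\<lambda>k. (a k)\<^sup>2"] by auto
      show ?thesis using U0_cyclic[OF w(1)] gen[OF w(1)] w(2) True
        by (intro exI[of _ "fdiag N f 1 (\<lambda>k. w k - 1)"]) (simp add: D_def)
    next
      case False
      define w where "w = (\<lambda>k. if k = m then -1 else (1::complex))"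
      have w1: "\<forall>k. cmod (w k) = 1" by (simp add: w_def)
      have "(\<Sum>k<N. complex_of_real ((a k)\<^sup>2) * w k) = (\<Sum>k<N. complex_of_real ((a k)\<^sup>2) - (if k = m then 2 * complex_of_real ((a m)\<^sup>2) else 0))"
        by (intro sum.cong refl) (auto simp: w_def)
      also have "\<dots> = complex_of_real (1 - 2 * am\<^sup>2)"
      proof -
        have cs: "(\<Sum>k<N. complex_of_real ((a k)\<^sup>2)) = 1" using asum by (metis of_real_1 of_real_sum)
        show ?thesis using m cs by (simp add: sum_subtractf)
      qed
      finally have s0: "(\<Sum>k<N. complex_of_real ((a k)\<^sup>2) * w k) = complex_of_real (1 - 2 * am\<^sup>2)" .
      have "cmod (\<Sum>k<N. complex_of_real ((a k)\<^sup>2) * w k) = \<bar>1 - 2 * am\<^sup>2\<bar>"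
        by (simp only: s0 norm_of_real)
      then have s: "cmod (\<Sum>k<N. complex_of_real ((a k)\<^sup>2) * w k) = 2 * am\<^sup>2 - 1"
        using False by simp
      show ?thesis using U0_cyclic[OF w1] gen[OF w1] s False key_alg[OF am0 am1]
        by (intro exI[of _ "fdiag N f 1 (\<lambda>k. w k - 1)"]) (simp add: D_def)
    qed
  qed
  have dmax: "d_max M N \<rho> = D"
    unfolding d_max_def
  proof (rule cSup_eq_maximum)
    obtain U0 where "cyclic_unitary M N \<rho> U0" "fu_dist M N \<rho> U0 = D" using attain by blast
    then show "D \<in> {fu_dist M N \<rho> U | U. cyclic_unitary M N \<rho> U}" by blast
  next
    fix x assume "x \<in> {fu_dist M N \<rho> U | U. cyclic_unitary M N \<rho> U}"
    then show "x \<le> D" using upper by blast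
  qed
  show ?thesis using attain dmax unfolding D_def am_def by auto
qed

end

theorem theorem1:
  fixes M N :: nat and \<epsilon> :: real and a :: "nat \<Rightarrow> real"
    and e f :: "nat \<Rightarrow> complex vec" and \<psi> :: "complex vec" and \<rho> :: "complex mat"
  assumes "M \<ge> N" and "N \<ge> 1"
    and "0 < \<epsilon>" and "\<epsilon> \<le> 1"
    and "\<forall>k<N. a k \<ge> 0" and "(\<Sum>k<N. (a k)\<^sup>2) = 1"
    and "\<forall>k<N. e k \<in> carrier_vec M" and "\<forall>k<N. \<forall>l<N. e k \<bullet>c e l = (if k = l then 1 else 0)"
    and "\<forall>k<N. f k \<in> carrier_vec N" and "\<forall>k<N. \<forall>l<N. f k \<bullet>c f l = (if k = l then 1 else 0)"
    and "\<psi> = vec (M*N) (\<lambda>r. \<Sum>k<N. complex_of_real (a k) * (e k $ (r div N)) * (f k $ (r mod N)))"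
    and "\<rho> = complex_of_real \<epsilon> \<cdot>\<^sub>m mat (M*N) (M*N) (\<lambda>(r,c). \<psi> $ r * cnj (\<psi> $ c))
             + complex_of_real ((1 - \<epsilon>) / real (M*N)) \<cdot>\<^sub>m 1\<^sub>m (M*N)"
  defines "am \<equiv> Max (a ` {..<N})"
  shows "(\<exists>U. cyclic_unitary M N \<rho> U \<and> fu_dist M N \<rho> U = d_max M N \<rho>) \<and>
         d_max M N \<rho> = (if am\<^sup>2 \<le> 1/2 then \<epsilon> else 2 * \<epsilon> * am * sqrt (1 - am\<^sup>2))"
  proof -
  interpret thm_ctx M N \<epsilon> a e f \<psi> \<rho>
    by (rule thm_ctx.intro) (rule assms)+
  show ?thesis unfolding am_def by (rule main)
qed

end
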